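(* Let $F$ be a once-punctured torus equipped with a point of the decorated super Teichmüller space $S\tilde T(F)$, with super semi-perimeter $h$. Let $\Omega$ be the infinite trivalent tree whose vertices are the ideal triangulations of $F$ and whose edges join triangulations related by a flip; each edge corresponds to the pair of arcs $\{a,b\}$ common to its two endpoint triangulations. For an oriented edge $\vec e$ with common arcs $a,b$ whose head is the triangulation $\{a,b,c\}$, set \[ \psi(\vec e)=\frac1h\left(\frac{c}{ab}+\frac{W_a}{2a}+\frac{W_b}{2b}\right). \] Then for any finite subtree $T$ of $\Omega$, \[ \sum_{\vec e\in\mathcal C(T)}\psi(\vec e)=1, \] where $\mathcal C(T)$ is the set of oriented edges of $\Omega$ whose head lies in $T$ and whose tail lies outside $T$.
   Context: Letters $a,b,c$ denote both ideal arcs and their super $\lambda$-lengths. $S\tilde T(F)$ is the decorated $\mathrm{OSp}(1|2)$ super Teichmüller space (Penner–Zeitlin), with values in a real Grassmann algebra: a point assigns, for each ideal triangulation of $F$ (three disjoint non-isotopic ideal arcs cutting $F$ into two ideal triangles), an even $\lambda$-length with positive body to each arc (depending only on the arc), an odd $\mu$-invariant to each triangle, and a spin structure orienting each arc. For an arc $e$, $W_e=\theta_1\theta_2$ with $\theta_1,\theta_2$ the $\mu$-invariants of the triangles adjacent to $e$ counter-clockwise and clockwise of $e$ relative to its spin orientation (independent of the triangulation). Flipping $c$ in $\{a,b,c\}$ gives $d$ with $cd=a^2+b^2+abW_c$. The super semi-perimeter is $h=\frac{a}{bc}+\frac{b}{ac}+\frac{c}{ab}+\frac{W_a}{a}+\frac{W_b}{b}+\frac{W_c}{c}$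 for any triangulation $\{a,b,c\}$, independent of the triangulation. *)

theory Defs
  imports Complex_Main
begin

text \<open>Ideal arcs on the once-punctured torus correspond to slopes in Q \<union> {\<infinity>},
  i.e. primitive integer vectors (p,q) up to sign; we normalise by q > 0, or q = 0 and p = 1.
  Two distinct arcs are disjoint iff the determinant of their vectors is +-1.
  An ideal triangulation is a set of three pairwise disjoint arcs (Farey triangle).\<close>

type_synonym arc = "int \<times> int"

definition is_arc :: "arc \<Rightarrow> bool" where
  "is_arc x \<longleftrightarrow> coprime (fst x) (snd x) \<and> (snd x > 0 \<or> (snd x = 0 \<and> fst x = 1))"

definition arcs_disjoint :: "arc \<Rightarrow> arc \<Rightarrow> bool" where
  "arcs_disjoint x y \<longleftrightarrow> \<bar>fst x * snd y - snd x * fst y\<bar> = 1"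

definition is_triangulation :: "arc set \<Rightarrow> bool" where
  "is_triangulation t \<longleftrightarrow> (\<exists>a b c. t = {a, b, c} \<and> is_arc a \<and> is_arc b \<and> is_arc c \<and>
      arcs_disjoint a b \<and> arcs_disjoint a c \<and> arcs_disjoint b c)"

definition flip_adj :: "arc set \<Rightarrow> arc set \<Rightarrow> bool" where
  "flip_adj t t' \<longleftrightarrow> is_triangulation t \<and> is_triangulation t' \<and> card (t \<inter> t') = 2"

text \<open>A finite subtree of Omega: a finite nonempty set of vertices whose induced subgraph
  is connected (Omega being a tree, this is exactly a finite subtree).\<close>
definition finite_subtree :: "arc set set \<Rightarrow> bool" where
  "finite_subtree T \<longleftrightarrow> finite T \<and> T \<noteq> {} \<and> T \<subseteq> Collect is_triangulation \<and>
     (\<forall>s\<in>T. \<forall>t\<in>T. (\<lambda>x y. x \<in> T \<and> y \<in> T \<and> flip_adj x y)\<^sup>*\<^sup>* s t)"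

definition coboundary :: "arc set set \<Rightarrow> (arc set \<times> arc set) set" where
  "coboundary T = {(u, v). flip_adj u v \<and> v \<in> T \<and> u \<notin> T}"

definition rinv :: "'a::comm_ring_1 \<Rightarrow> 'a" where
  "rinv x = (if \<exists>y. x * y = 1 then (THE y. x * y = 1) else 0)"

definition body_hom :: "('a::{real_algebra_1, comm_ring_1} \<Rightarrow> real) \<Rightarrow> bool" where
  "body_hom body \<longleftrightarrow> body 1 = 1 \<and> (\<forall>x y. body (x + y) = body x + body y) \<and>
     (\<forall>x y. body (x * y) = body x * body y) \<and> (\<forall>r x. body (r *\<^sub>R x) = r * body x) \<and>
     (\<forall>x. body x = 0 \<longrightarrow> (\<exists>n. x ^ n = 0))"

definition flip_relation :: "(arc \<Rightarrow> 'a::comm_ring_1) \<Rightarrow> (arc \<Rightarrow> 'a) \<Rightarrow> bool" where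
  "flip_relation lam W \<longleftrightarrow> (\<forall>a b c d. is_triangulation {a, b, c} \<and> is_triangulation {a, b, d} \<and> c \<noteq> d
      \<longrightarrow> lam c * lam d = lam a ^ 2 + lam b ^ 2 + lam a * lam b * W c)"

definition super_point :: "('a::{real_algebra_1, comm_ring_1} \<Rightarrow> real) \<Rightarrow> (arc \<Rightarrow> 'a) \<Rightarrow> (arc \<Rightarrow> 'a) \<Rightarrow> bool" where
  "super_point body lam W \<longleftrightarrow> body_hom body \<and> (\<forall>a. is_arc a \<longrightarrow> body (lam a) > 0) \<and>
     (\<forall>a. is_arc a \<longrightarrow> body (W a) = 0) \<and> flip_relation lam W"

definition semi_perimeter :: "(arc \<Rightarrow> 'a::comm_ring_1) \<Rightarrow> (arc \<Rightarrow> 'a) \<Rightarrow> arc set \<Rightarrow> 'a" where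
  "semi_perimeter lam W t = (\<Sum>x\<in>t. lam x * rinv (\<Prod>y\<in>t - {x}. lam y)) + (\<Sum>x\<in>t. W x * rinv (lam x))"

definition base_triangulation :: "arc set" where
  "base_triangulation = {(1, 0), (0, 1), (1, 1)}"

text \<open>h, evaluated at a fixed triangulation (it is independent of the triangulation).\<close>
definition super_semiperimeter :: "(arc \<Rightarrow> 'a::comm_ring_1) \<Rightarrow> (arc \<Rightarrow> 'a) \<Rightarrow> 'a" where
  "super_semiperimeter lam W = semi_perimeter lam W base_triangulation"

text \<open>psi of an oriented edge (u, v) with head v = {a,b,c}, where {a,b} = u \<inter> v.\<close>
definition psi :: "(arc \<Rightarrow> 'a::{real_algebra_1, comm_ring_1}) \<Rightarrow> (arc \<Rightarrow> 'a) \<Rightarrow> 'a \<Rightarrow> arc set \<times> arc set \<Rightarrow> 'a" where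
  "psi lam W h e = (let u = fst e; v = snd e; c = the_elem (v - u) in
     rinv h * (lam c * rinv (\<Prod>x\<in>u \<inter> v. lam x) + (\<Sum>x\<in>u \<inter> v. W x * rinv (2 * lam x))))"

end

theory Submission
  imports Defs
begin

definition det2 :: "arc \<Rightarrow> arc \<Rightarrow> int" where
  "det2 x y = fst x * snd y - snd x * fst y"

definition nrm :: "arc \<Rightarrow> arc" where
  "nrm x = (if snd x < 0 \<or> (snd x = 0 \<and> fst x < 0) then (- fst x, - snd x) else x)"

definition lc :: "int \<Rightarrow> arc \<Rightarrow> int \<Rightarrow> arc \<Rightarrow> arc" where
  "lc s x t y = (s * fst x + t * fst y, s * snd x + t * snd y)"

definition Qf :: "arc \<Rightarrow> int" where
  "Qf x = fst x ^ 2 + fst x * snd x + snd x ^ 2"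

definition opp :: "arc \<Rightarrow> arc \<Rightarrow> arc \<Rightarrow> arc" where
  "opp x y z = (if z = nrm (lc 1 x 1 y) then nrm (lc 1 x (-1) y) else nrm (lc 1 x 1 y))"

definition tri :: "arc \<Rightarrow> arc \<Rightarrow> arc \<Rightarrow> bool" where
  "tri a b c \<longleftrightarrow> is_arc a \<and> is_arc b \<and> is_arc c \<and> arcs_disjoint a b \<and> arcs_disjoint a c \<and> arcs_disjoint b c"

lemma disj_det: "arcs_disjoint x y \<longleftrightarrow> \<bar>det2 x y\<bar> = 1"
  by (simp add: arcs_disjoint_def det2_def)

lemma disj_sym: "arcs_disjoint x y \<Longrightarrow> arcs_disjoint y x"
  by (simp add: arcs_disjoint_def abs_minus_commute mult.commute)

lemma disj_comm: "arcs_disjoint x y = arcs_disjoint y x"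
  by (simp add: arcs_disjoint_def abs_minus_commute mult.commute)

lemma disj_irr: "\<not> arcs_disjoint x x"
  by (simp add: arcs_disjoint_def mult.commute)

lemma nrm_neg: "nrm (- p, - q) = nrm (p, q)"
  by (auto simp: nrm_def)

lemma nrm_neg': "nrm (- fst v, - snd v) = nrm v"
  by (cases v) (simp add: nrm_neg)

lemma nrm_arc: "is_arc x \<Longrightarrow> nrm x = x"
  by (auto simp: nrm_def is_arc_def)

lemma nrm_cases: "nrm x = x \<or> nrm x = (- fst x, - snd x)"
  by (auto simp: nrm_def)

lemma nrm_eq: "nrm X = nrm Y \<Longrightarrow> X = Y \<or> X = (- fst Y, - snd Y)"
  by (cases X, cases Y) (auto simp: nrm_def split: if_splits)

lemma Qf_nrm: "Qf (nrm x) = Qf x"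
  by (auto simp: nrm_def Qf_def)

lemma det_nrm2: "\<bar>det2 x (nrm v)\<bar> = \<bar>det2 x v\<bar>"
  by (auto simp: nrm_def det2_def)

lemma det_nrm1: "\<bar>det2 (nrm v) x\<bar> = \<bar>det2 v x\<bar>"
  by (auto simp: nrm_def det2_def)

lemma arc_nrm:
  assumes "\<bar>det2 x v\<bar> = 1"
  shows "is_arc (nrm v)"
proof -
  obtain p q where v: "v = (p, q)" by (cases v)
  have cop: "coprime p q"
  proof (rule coprimeI)
    fix c assume "c dvd p" "c dvd q"
    then have "c dvd det2 x v" by (simp add: v det2_def)
    then have "c dvd \<bar>det2 x v\<bar>" by simp
    then show "is_unit c" using assms by simp
  qed
  have nz: "v \<noteq> (0, 0)" using assms by (auto simp: det2_def)
  show ?thesis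
  proof (cases "q < 0 \<or> (q = 0 \<and> p < 0)")
    case True
    then have "nrm v = (-p, -q)" by (simp add: nrm_def v)
    moreover have "coprime (-p) (-q)" using cop by simp
    moreover have "q = 0 \<Longrightarrow> p = -1" using True cop v by (auto simp: coprime_int_iff  zdvd1_eq)
    ultimately show ?thesis using True by (auto simp: is_arc_def)
  next
    case False
    then have "nrm v = (p, q)" by (simp add: nrm_def v)
    moreover have "q = 0 \<Longrightarrow> p = 1" using False cop v nz by (auto simp: zdvd1_eq)
    ultimately show ?thesis using False cop by (auto simp: is_arc_def)
  qed
qed

lemma abs1: "\<bar>(x::int)\<bar> = 1 \<longleftrightarrow> x = 1 \<or> x = -1"
  by auto

lemma arc_char:
  assumes "is_arc z" "arcs_disjoint a b" "arcs_disjoint a z" "arcs_disjoint b z"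
  shows "z = nrm (lc 1 a 1 b) \<or> z = nrm (lc 1 a (-1) b)"
proof -
  obtain p1 q1 where a: "a = (p1, q1)" by (cases a)
  obtain p2 q2 where b: "b = (p2, q2)" by (cases b)
  obtain x y where z: "z = (x, y)" by (cases z)
  define D where "D = p1 * q2 - q1 * p2"
  define u where "u = x * q2 - y * p2"
  define w where "w = p1 * y - q1 * x"
  have D: "D = 1 \<or> D = -1" using assms(2) by (simp add: arcs_disjoint_def a b D_def abs1)
  have u: "u = 1 \<or> u = -1" using assms(4) by (auto simp add: arcs_disjoint_def z b u_def abs1 algebra_simps)
  have w: "w = 1 \<or> w = -1" using assms(3) by (simp add: arcs_disjoint_def a z w_def abs1)
  have ix: "D * x = u * p1 + w * p2" by (simp add: D_def u_def w_def algebra_simps)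
  have iy: "D * y = u * q1 + w * q2" by (simp add: D_def u_def w_def algebra_simps)
  have zn: "nrm z = z" using assms(1) by (rule nrm_arc)
  have xy: "x = D * u * p1 + D * w * p2 \<and> y = D * u * q1 + D * w * q2"
  proof -
    have DD: "D * D = 1" using D by auto
    have "x = D * (D * x)" "y = D * (D * y)" using DD by (simp_all add: mult.assoc[symmetric])
    then show ?thesis using ix iy by (simp add: algebra_simps)
  qed
  have "z = lc 1 a 1 b \<or> z = (- fst (lc 1 a 1 b), - snd (lc 1 a 1 b)) \<or>
     z = lc 1 a (-1) b \<or> z = (- fst (lc 1 a (-1) b), - snd (lc 1 a (-1) b))"
    using D u w xy unfolding z a b lc_def by (elim disjE) simp_all
  then show ?thesis using zn nrm_neg'[of "lc 1 a 1 b"] nrm_neg'[of "lc 1 a (-1) b"]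
    by (elim disjE) simp_all
qed

lemma nrm_pm_ne:
  assumes "arcs_disjoint a b"
  shows "nrm (lc 1 a 1 b) \<noteq> nrm (lc 1 a (-1) b)"
proof
  assume "nrm (lc 1 a 1 b) = nrm (lc 1 a (-1) b)"
  from nrm_eq[OF this] assms show False
    by (cases a, cases b) (auto simp: lc_def arcs_disjoint_def)
qed

lemma det_lc_a: "det2 a (lc r a s b) = s * det2 a b"
  by (simp add: det2_def lc_def algebra_simps)
lemma det_lc_b: "det2 b (lc r a s b) = - r * det2 a b"
  by (simp add: det2_def lc_def algebra_simps)

lemma lc_arc:
  assumes "arcs_disjoint a b" "\<bar>s\<bar> = 1"
  shows "is_arc (nrm (lc r a s b))"
  using assms by (intro arc_nrm[of a]) (simp add: det_lc_a disj_det abs_mult)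

lemma lc_disj_a:
  assumes "arcs_disjoint a b" "\<bar>s\<bar> = 1"
  shows "arcs_disjoint a (nrm (lc r a s b))"
  using assms by (simp add: disj_det det_nrm2 det_lc_a abs_mult)

lemma lc_disj_b:
  assumes "arcs_disjoint a b" "\<bar>r\<bar> = 1"
  shows "arcs_disjoint b (nrm (lc r a s b))"
  using assms by (simp add: disj_det det_nrm2 det_lc_b abs_mult)

lemma tri_distinct: "tri a b c \<Longrightarrow> a \<noteq> b \<and> a \<noteq> c \<and> b \<noteq> c"
  unfolding tri_def by (metis disj_irr)

lemma tri_perm: "tri a b c \<Longrightarrow> tri b a c \<and> tri a c b \<and> tri c b a \<and> tri b c a \<and> tri c a b"
  by (auto simp: tri_def disj_comm)

lemma opp_props:
  assumes "tri a b c"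
  shows "is_arc (opp a b c) \<and> arcs_disjoint a (opp a b c) \<and> arcs_disjoint b (opp a b c) \<and> opp a b c \<noteq> c"
proof -
  have ab: "arcs_disjoint a b" using assms by (simp add: tri_def)
  have c: "c = nrm (lc 1 a 1 b) \<or> c = nrm (lc 1 a (-1) b)"
    using assms by (intro arc_char) (auto simp: tri_def)
  have ne: "nrm (lc 1 a 1 b) \<noteq> nrm (lc 1 a (-1) b)" using nrm_pm_ne[OF ab] .
  have "opp a b c = nrm (lc 1 a 1 b) \<or> opp a b c = nrm (lc 1 a (-1) b)"
    by (simp add: opp_def)
  moreover have "opp a b c \<noteq> c" using c ne by (auto simp: opp_def)
  moreover have "is_arc (nrm (lc 1 a 1 b))" "is_arc (nrm (lc 1 a (-1) b))"
    "arcs_disjoint a (nrm (lc 1 a 1 b))" "arcs_disjoint a (nrm (lc 1 a (-1) b))"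
    "arcs_disjoint b (nrm (lc 1 a 1 b))" "arcs_disjoint b (nrm (lc 1 a (-1) b))"
    using lc_arc[OF ab] lc_disj_a[OF ab] lc_disj_b[OF ab] by simp_all
  ultimately show ?thesis by metis
qed

lemma opp_unique:
  assumes "tri a b c" "is_arc w" "arcs_disjoint a w" "arcs_disjoint b w" "w \<noteq> c"
  shows "opp a b c = w"
proof -
  have ab: "arcs_disjoint a b" using assms by (simp add: tri_def)
  have c: "c = nrm (lc 1 a 1 b) \<or> c = nrm (lc 1 a (-1) b)"
    using assms by (intro arc_char) (auto simp: tri_def)
  have w: "w = nrm (lc 1 a 1 b) \<or> w = nrm (lc 1 a (-1) b)"
    using assms by (intro arc_char) (auto simp: tri_def)
  show ?thesis using c w assms(5) by (auto simp: opp_def)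
qed

lemma tri_opp: "tri a b c \<Longrightarrow> tri a b (opp a b c)"
  using opp_props[of a b c] by (auto simp: tri_def)

lemma opp_notin: "tri a b c \<Longrightarrow> opp a b c \<notin> {a, b, c}"
  using opp_props[of a b c] tri_distinct[of a b c] unfolding tri_def by (metis disj_irr insert_iff singletonD)

lemma opp_sym: "opp b a c = opp a b c"
proof -
  have 1: "nrm (lc 1 b 1 a) = nrm (lc 1 a 1 b)" by (simp add: lc_def add.commute)
  have 2: "nrm (lc 1 b (-1) a) = nrm (lc 1 a (-1) b)"
    using nrm_neg[of "fst a - fst b" "snd a - snd b"] by (simp add: lc_def)
  show ?thesis by (simp add: opp_def 1 2)
qed

lemma opp_opp: "tri a b c \<Longrightarrow> opp a b (opp a b c) = c"
  using opp_props[of a b c] by (intro opp_unique) (auto simp: tri_def tri_opp)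

lemma triang_iff: "is_triangulation {a, b, c} \<longleftrightarrow> tri a b c"
proof
  assume "tri a b c" then show "is_triangulation {a, b, c}"
    unfolding is_triangulation_def tri_def by blast
next
  assume "is_triangulation {a, b, c}"
  then obtain x y z where e: "{a, b, c} = {x, y, z}" and t: "tri x y z"
    unfolding is_triangulation_def tri_def by blast
  have d: "x \<noteq> y" "x \<noteq> z" "y \<noteq> z" using tri_distinct[OF t] by auto
  have "card {x, y, z} = 3" using d by simp
  then have "card {a, b, c} = 3" using e by simp
  then have dd: "a \<noteq> b" "a \<noteq> c" "b \<noteq> c" by (auto simp: card_insert_if split: if_splits)
  have arcs: "\<forall>v\<in>{x,y,z}. is_arc v" using t by (simp add: tri_def)
  have dis: "\<forall>v\<in>{x,y,z}. \<forall>w\<in>{x,y,z}. v \<noteq> w \<longrightarrow> arcs_disjoint v w"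
    using t by (auto simp: tri_def disj_comm)
  have m: "a \<in> {x,y,z}" "b \<in> {x,y,z}" "c \<in> {x,y,z}" using e by auto
  show "tri a b c" unfolding tri_def using arcs dis dd m by meson
qed

lemma triang_cases:
  assumes "is_triangulation t"
  obtains a b c where "t = {a, b, c}" "tri a b c"
  using assms unfolding is_triangulation_def tri_def by blast


lemma opp1:
  assumes t: "tri a b c" and s: "s = 1 \<or> s = -1" and c: "c = nrm (lc 1 a s b)"
  shows "opp a b c = nrm (lc 1 a (-s) b)"
proof -
  have ab: "arcs_disjoint a b" using t by (simp add: tri_def)
  show ?thesis
  proof (rule opp_unique[OF t])
    show "is_arc (nrm (lc 1 a (- s) b))" using lc_arc[OF ab] s by auto
    show "arcs_disjoint a (nrm (lc 1 a (- s) b))" using lc_disj_a[OF ab] s by auto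
    show "arcs_disjoint b (nrm (lc 1 a (- s) b))" using lc_disj_b[OF ab] by auto
    show "nrm (lc 1 a (- s) b) \<noteq> c" using nrm_pm_ne[OF ab] s c by auto
  qed
qed

lemma opp2:
  assumes t: "tri a b c" and s: "s = 1 \<or> s = -1" and c: "c = nrm (lc 1 a s b)"
  shows "opp a c b = nrm (lc 2 a s b)"
proof -
  have ab: "arcs_disjoint a b" using t by (simp add: tri_def)
  have D: "\<bar>det2 a b\<bar> = 1" using ab by (simp add: disj_det)
  have t': "tri a c b" using tri_perm[OF t] by simp
  show ?thesis
  proof (rule opp_unique[OF t'])
    show "is_arc (nrm (lc 2 a s b))" using lc_arc[OF ab] s by auto
    show "arcs_disjoint a (nrm (lc 2 a s b))" using lc_disj_a[OF ab] s by auto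
    have "det2 (lc 1 a s b) (lc 2 a s b) = - s * det2 a b"
      by (simp add: det2_def lc_def algebra_simps)
    then have "\<bar>det2 (lc 1 a s b) (lc 2 a s b)\<bar> = 1" using s D by (auto simp: abs_mult)
    then show "arcs_disjoint c (nrm (lc 2 a s b))"
      unfolding c disj_det using det_nrm1 det_nrm2 by metis
    show "nrm (lc 2 a s b) \<noteq> b"
    proof
      assume "nrm (lc 2 a s b) = b"
      then have "nrm (lc 2 a s b) = nrm b" using t by (simp add: tri_def nrm_arc)
      from nrm_eq[OF this] have "lc 2 a s b = b \<or> lc 2 a s b = (- fst b, - snd b)" .
      then have "det2 (lc 2 a s b) b = 0" by (auto simp: det2_def)
      moreover have "det2 (lc 2 a s b) b = 2 * det2 a b" by (simp add: det2_def lc_def algebra_simps)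
      ultimately show False using D by simp
    qed
  qed
qed

lemma opp3:
  assumes t: "tri a b c" and s: "s = 1 \<or> s = -1" and c: "c = nrm (lc 1 a s b)"
  shows "opp b c a = nrm (lc 1 a (2 * s) b)"
proof -
  have ab: "arcs_disjoint a b" using t by (simp add: tri_def)
  have D: "\<bar>det2 a b\<bar> = 1" using ab by (simp add: disj_det)
  have t': "tri b c a" using tri_perm[OF t] by simp
  show ?thesis
  proof (rule opp_unique[OF t'])
    have "det2 b (lc 1 a (2 * s) b) = - det2 a b" by (simp add: det2_def lc_def algebra_simps)
    then have d: "\<bar>det2 b (lc 1 a (2 * s) b)\<bar> = 1" using D by simp
    then show "is_arc (nrm (lc 1 a (2 * s) b))" by (rule arc_nrm)
    show "arcs_disjoint b (nrm (lc 1 a (2 * s) b))" using d by (simp add: disj_det det_nrm2)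
    have "det2 (lc 1 a s b) (lc 1 a (2 * s) b) = s * det2 a b"
      by (simp add: det2_def lc_def algebra_simps)
    then have "\<bar>det2 (lc 1 a s b) (lc 1 a (2 * s) b)\<bar> = 1" using s D by (auto simp: abs_mult)
    then show "arcs_disjoint c (nrm (lc 1 a (2 * s) b))"
      unfolding c disj_det using det_nrm1 det_nrm2 by metis
    show "nrm (lc 1 a (2 * s) b) \<noteq> a"
    proof
      assume "nrm (lc 1 a (2 * s) b) = a"
      then have "nrm (lc 1 a (2 * s) b) = nrm a" using t by (simp add: tri_def nrm_arc)
      from nrm_eq[OF this] have "lc 1 a (2 * s) b = a \<or> lc 1 a (2 * s) b = (- fst a, - snd a)" .
      then have "det2 a (lc 1 a (2 * s) b) = 0" by (auto simp: det2_def)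
      moreover have "det2 a (lc 1 a (2 * s) b) = 2 * s * det2 a b" by (simp add: det2_def lc_def algebra_simps)
      ultimately show False using D s by auto
    qed
  qed
qed

lemma rank_core:
  assumes t: "tri a b c"
  shows "\<exists>QA QB \<beta> k. Qf a = QA \<and> Qf b = QB \<and> Qf c = QA + QB + \<beta> \<and>
     Qf (opp a b c) = QA + QB - \<beta> \<and> Qf (opp a c b) = 4 * QA + QB + 2 * \<beta> \<and>
     Qf (opp b c a) = QA + 4 * QB + 2 * \<beta> \<and> 4 * QA * QB = \<beta>^2 + 3 \<and> \<beta> = 2 * k + 1"
proof -
  have ab: "arcs_disjoint a b" using t by (simp add: tri_def)
  have c0: "c = nrm (lc 1 a 1 b) \<or> c = nrm (lc 1 a (-1) b)"
    using t by (intro arc_char) (auto simp: tri_def)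
  then obtain s where s: "s = 1 \<or> s = -1" and c: "c = nrm (lc 1 a s b)" by blast
  obtain p1 q1 where a: "a = (p1, q1)" by (cases a)
  obtain p2 q2 where b: "b = (p2, q2)" by (cases b)
  define D where "D = p1 * q2 - q1 * p2"
  have D: "D = 1 \<or> D = -1" using ab by (simp add: arcs_disjoint_def a b D_def abs1)
  define \<beta> where "\<beta> = 2 * p1 * (s * p2) + p1 * (s * q2) + q1 * (s * p2) + 2 * q1 * (s * q2)"
  have e1: "Qf c = Qf a + Qf b + \<beta>" unfolding c Qf_nrm using s
    by (elim disjE; simp add: Qf_def lc_def a b \<beta>_def power2_eq_square algebra_simps)
  have e2: "Qf (opp a b c) = Qf a + Qf b - \<beta>" unfolding opp1[OF t s c] Qf_nrm using s
    by (elim disjE; simp add: Qf_def lc_def a b \<beta>_def power2_eq_square algebra_simps)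
  have e3: "Qf (opp a c b) = 4 * Qf a + Qf b + 2 * \<beta>" unfolding opp2[OF t s c] Qf_nrm using s
    by (elim disjE; simp add: Qf_def lc_def a b \<beta>_def power2_eq_square algebra_simps)
  have e4: "Qf (opp b c a) = Qf a + 4 * Qf b + 2 * \<beta>" unfolding opp3[OF t s c] Qf_nrm using s
    by (elim disjE; simp add: Qf_def lc_def a b \<beta>_def power2_eq_square algebra_simps)
  have e5: "4 * Qf a * Qf b = \<beta>^2 + 3 * D^2" using s
    by (elim disjE; simp add: Qf_def a b \<beta>_def D_def power2_eq_square algebra_simps)
  have e6: "\<beta> = 2 * (s * (p1 * p2 + q1 * q2 + q1 * p2)) + s * D"
    by (simp add: \<beta>_def D_def algebra_simps)
  have "\<exists>k. \<beta> = 2 * k + 1"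
  proof -
    have "s * D = 1 \<or> s * D = -1" using s D by auto
    then show ?thesis
    proof
      assume "s * D = 1" then show ?thesis using e6 by auto
    next
      assume "s * D = -1" then have "\<beta> = 2 * (s * (p1 * p2 + q1 * q2 + q1 * p2) - 1) + 1" using e6 by simp
      then show ?thesis by blast
    qed
  qed
  then obtain k where "\<beta> = 2 * k + 1" by blast
  moreover have "D^2 = 1" using D by auto
  ultimately show ?thesis using e1 e2 e3 e4 e5 by auto
qed


definition froot :: "arc set" where "froot = {(1,0), (0,1), (-1,1)}"

lemma Qf_nonneg: "Qf x \<ge> 0"
proof -
  have "4 * Qf x = (2 * fst x + snd x)^2 + 3 * (snd x)^2"
    by (simp add: Qf_def power2_eq_square algebra_simps)
  moreover have "(2 * fst x + snd x)^2 \<ge> 0" "(snd x)^2 \<ge> 0" by simp_all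
  ultimately show ?thesis by linarith
qed

lemma Qf_one:
  assumes "is_arc x" "Qf x = 1"
  shows "x \<in> froot"
proof -
  obtain p q where x: "x = (p, q)" by (cases x)
  have q: "q > 0 \<or> (q = 0 \<and> p = 1)" using assms(1) by (simp add: is_arc_def x)
  have e: "4 = (2 * p + q)^2 + 3 * q^2" using assms(2)
    by (simp add: Qf_def x power2_eq_square algebra_simps)
  show ?thesis
  proof (cases "q = 0")
    case True then show ?thesis using q by (simp add: x froot_def)
  next
    case False
    then have q1: "q \<ge> 1" using q by simp
    have "q < 2"
    proof (rule ccontr)
      assume "\<not> q < 2"
      then have "q^2 \<ge> 2^2" by (intro power_mono) auto
      then have "3 * q^2 \<ge> 12" by simp
      moreover have "(2 * p + q)^2 \<ge> 0" by simp
      ultimately show False using e by linarith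
    qed
    then have "q = 1" using q1 by simp
    then have "p * (p + 1) = 0" using assms(2) by (simp add: Qf_def x power2_eq_square algebra_simps)
    then have "p = 0 \<or> p = -1" by auto
    then show ?thesis using \<open>q = 1\<close> by (auto simp: x froot_def)
  qed
qed

lemma rank_facts:
  assumes t: "tri a b c"
  shows "Qf (opp a b c) \<noteq> Qf c" "Qf (opp a c b) \<noteq> Qf b" "Qf (opp b c a) \<noteq> Qf a"
    "\<not> (Qf (opp a b c) < Qf c \<and> Qf (opp a c b) < Qf b)"
    "\<not> (Qf (opp a b c) < Qf c \<and> Qf (opp b c a) < Qf a)"
    "\<not> (Qf (opp a c b) < Qf b \<and> Qf (opp b c a) < Qf a)"
    "Qf (opp a b c) > Qf c \<Longrightarrow> Qf (opp a c b) > Qf b \<Longrightarrow> Qf (opp b c a) > Qf a \<Longrightarrow> {a, b, c} = froot"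
proof -
  obtain QA QB \<beta> k where e: "Qf a = QA" "Qf b = QB" "Qf c = QA + QB + \<beta>"
     "Qf (opp a b c) = QA + QB - \<beta>" "Qf (opp a c b) = 4 * QA + QB + 2 * \<beta>"
     "Qf (opp b c a) = QA + 4 * QB + 2 * \<beta>" "4 * QA * QB = \<beta>^2 + 3" "\<beta> = 2 * k + 1"
    using rank_core[OF t] by blast
  have QA: "QA \<ge> 0" using Qf_nonneg e(1) by metis
  have QB: "QB \<ge> 0" using Qf_nonneg e(2) by metis
  show "Qf (opp a b c) \<noteq> Qf c" "Qf (opp a c b) \<noteq> Qf b" "Qf (opp b c a) \<noteq> Qf a"
    using e by presburger+
  show "\<not> (Qf (opp a b c) < Qf c \<and> Qf (opp a c b) < Qf b)"
    "\<not> (Qf (opp a b c) < Qf c \<and> Qf (opp b c a) < Qf a)"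
    using e QA QB by linarith+
  show "\<not> (Qf (opp a c b) < Qf b \<and> Qf (opp b c a) < Qf a)"
  proof
    assume "Qf (opp a c b) < Qf b \<and> Qf (opp b c a) < Qf a"
    then have h1: "2 * QA < - \<beta>" and h2: "2 * QB < - \<beta>" using e by linarith+
    have "(2 * QA) * (2 * QB) < (- \<beta>) * (- \<beta>)"
      using h1 h2 QA QB by (intro mult_strict_mono) auto
    then show False using e(7) by (simp add: power2_eq_square)
  qed
  assume l: "Qf (opp a b c) > Qf c" "Qf (opp a c b) > Qf b" "Qf (opp b c a) > Qf a"
  define u where "u = - \<beta>"
  define v where "v = 2 * QB - u"
  define w where "w = 2 * QA - u"
  have u: "u \<ge> 1" and v: "v \<ge> 1" and w: "w \<ge> 1" using l e unfolding u_def v_def w_def by linarith+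
  have "(u + w) * (u + v) = u * u + 3" using e(7) unfolding u_def v_def w_def
    by (simp add: power2_eq_square algebra_simps)
  then have s3: "u * v + u * w + v * w = 3" by (simp add: algebra_simps)
  have "u * v \<ge> 1" "u * w \<ge> 1" "v * w \<ge> 1" using u v w
    by (metis mult_le_cancel_left1 order_trans zero_less_one_class.zero_le_one
          linorder_not_less less_le_trans)+
  then have "u * v = 1" "u * w = 1" "v * w = 1" using s3 by linarith+
  then have "u = 1" "v = 1" "w = 1" using u v w by (auto simp: zmult_eq_1_iff)
  then have "Qf a = 1" "Qf b = 1" "Qf c = 1" using e unfolding u_def v_def w_def by linarith+
  then have "a \<in> froot" "b \<in> froot" "c \<in> froot" using t Qf_one by (auto simp: tri_def)
  moreover have "a \<noteq> b" "a \<noteq> c" "b \<noteq> c" using tri_distinct[OF t] by auto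
  ultimately show "{a, b, c} = froot" unfolding froot_def by auto
qed


definition rk :: "arc set \<Rightarrow> int" where "rk t = (\<Sum>x\<in>t. Qf x)"

lemma card3: "tri a b c \<Longrightarrow> card {a, b, c} = 3"
  using tri_distinct[of a b c] by simp

lemma N_char:
  assumes t: "tri a b c"
  shows "{u. flip_adj u {a, b, c}} = {{a, b, opp a b c}, {a, c, opp a c b}, {b, c, opp b c a}}"
proof (intro equalityI subsetI)
  fix u assume "u \<in> {u. flip_adj u {a, b, c}}"
  then have fa: "flip_adj u {a, b, c}" by simp
  then have ut: "is_triangulation u" and ci: "card (u \<inter> {a, b, c}) = 2" by (auto simp: flip_adj_def)
  obtain x y z where u: "u = {x, y, z}" and txyz: "tri x y z" using ut by (rule triang_cases)
  have cu: "card u = 3" using card3[OF txyz] u by simp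
  have ct: "card {a, b, c} = 3" using card3[OF t] .
  have fu: "finite u" using u by simp
  have "card ({a, b, c} - u) = card {a, b, c} - card ({a, b, c} \<inter> u)"
    by (rule card_Diff_subset_Int) simp
  also have "{a, b, c} \<inter> u = u \<inter> {a, b, c}" by auto
  finally have "card ({a, b, c} - u) = 1" using ci ct by simp
  then obtain e where e: "{a, b, c} - u = {e}" by (auto simp: card_Suc_eq)
  have "card (u - {a, b, c}) = card u - card (u \<inter> {a, b, c})"
    by (rule card_Diff_subset_Int) (simp add: fu)
  then have "card (u - {a, b, c}) = 1" using ci cu by simp
  then obtain w where w: "u - {a, b, c} = {w}" by (auto simp: card_Suc_eq)
  have ue: "u = ({a, b, c} - {e}) \<union> {w}" using e w by blast
  have wn: "w \<notin> {a, b, c}" using w by blast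
  have "e \<in> {a, b, c}" using e by blast
  moreover have ds: "a \<noteq> b" "a \<noteq> c" "b \<noteq> c" using tri_distinct[OF t] by auto
  ultimately consider "e = c" | "e = b" | "e = a" by blast
  then show "u \<in> {{a, b, opp a b c}, {a, c, opp a c b}, {b, c, opp b c a}}"
  proof cases
    case 1
    then have uu: "u = {a, b, w}" using ue ds by auto
    then have "tri a b w" using ut triang_iff by simp
    then have "opp a b c = w" using wn t by (intro opp_unique) (auto simp: tri_def)
    then show ?thesis using uu by simp
  next
    case 2
    then have uu: "u = {a, c, w}" using ue ds by auto
    then have "tri a c w" using ut triang_iff by simp
    moreover have "tri a c b" using tri_perm[OF t] by simp
    ultimately have "opp a c b = w" using wn by (intro opp_unique) (auto simp: tri_def)
    then show ?thesis using uu by simp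
  next
    case 3
    then have uu: "u = {b, c, w}" using ue ds by auto
    then have "tri b c w" using ut triang_iff by simp
    moreover have "tri b c a" using tri_perm[OF t] by simp
    ultimately have "opp b c a = w" using wn by (intro opp_unique) (auto simp: tri_def)
    then show ?thesis using uu by simp
  qed
next
  fix u assume "u \<in> {{a, b, opp a b c}, {a, c, opp a c b}, {b, c, opp b c a}}"
  have "flip_adj {x, y, opp x y z} {a, b, c}"
    if "tri x y z" "{x, y, z} = {a, b, c}" for x y z
  proof -
    have "is_triangulation {x, y, opp x y z}" using tri_opp[OF that(1)] triang_iff by simp
    moreover have "is_triangulation {a, b, c}" using t triang_iff by simp
    moreover have "{x, y, opp x y z} \<inter> {x, y, z} = {x, y}"
      using opp_notin[OF that(1)] by auto
    then have "{x, y, opp x y z} \<inter> {a, b, c} = {x, y}" using that(2) by simp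
    moreover have "card {x, y} = 2" using tri_distinct[OF that(1)] by simp
    ultimately show ?thesis by (simp add: flip_adj_def)
  qed
  note H = this
  have t2: "tri a c b" "tri b c a" using tri_perm[OF t] by auto
  have e2: "{a, c, b} = {a, b, c}" "{b, c, a} = {a, b, c}" by auto
  have "flip_adj {a, b, opp a b c} {a, b, c}" by (rule H[OF t refl])
  moreover have "flip_adj {a, c, opp a c b} {a, b, c}" by (rule H[OF t2(1) e2(1)])
  moreover have "flip_adj {b, c, opp b c a} {a, b, c}" by (rule H[OF t2(2) e2(2)])
  ultimately show "u \<in> {u. flip_adj u {a, b, c}}"
    using \<open>u \<in> _\<close> by blast
qed

lemma N_distinct:
  assumes t: "tri a b c"
  shows "{a, b, opp a b c} \<noteq> {a, c, opp a c b}" "{a, b, opp a b c} \<noteq> {b, c, opp b c a}"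
    "{a, c, opp a c b} \<noteq> {b, c, opp b c a}"
proof -
  have t2: "tri a c b" "tri b c a" using tri_perm[OF t] by auto
  have n: "opp a b c \<notin> {a, b, c}" "opp a c b \<notin> {a, c, b}" "opp b c a \<notin> {b, c, a}"
    using opp_notin[OF t] opp_notin[OF t2(1)] opp_notin[OF t2(2)] by auto
  have ds: "a \<noteq> b" "a \<noteq> c" "b \<noteq> c" using tri_distinct[OF t] by auto
  have m: "c \<in> {a, c, opp a c b}" "c \<notin> {a, b, opp a b c}" "a \<notin> {b, c, opp b c a}"
    "b \<notin> {a, c, opp a c b}" "b \<in> {b, c, opp b c a}"
    using n ds by auto
  show "{a, b, opp a b c} \<noteq> {a, c, opp a c b}" using m(1,2) by blast
  show "{a, b, opp a b c} \<noteq> {b, c, opp b c a}" using m(3) by blast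
  show "{a, c, opp a c b} \<noteq> {b, c, opp b c a}" using m(4,5) by blast
qed

lemma rk3: "tri a b c \<Longrightarrow> rk {a, b, c} = Qf a + Qf b + Qf c"
  using tri_distinct[of a b c] by (simp add: rk_def)

lemma adj_sym: "flip_adj u v \<Longrightarrow> flip_adj v u"
  by (simp add: flip_adj_def Int_commute)

lemma adj_cases:
  assumes "flip_adj u v"
  obtains a b c where "v = {a, b, c}" "tri a b c"
    "u = {a, b, opp a b c} \<or> u = {a, c, opp a c b} \<or> u = {b, c, opp b c a}"
proof -
  have "is_triangulation v" using assms by (simp add: flip_adj_def)
  then obtain a b c where v: "v = {a, b, c}" and t: "tri a b c" by (rule triang_cases)
  have "u \<in> {u. flip_adj u {a, b, c}}" using assms v by simp
  then have "u = {a, b, opp a b c} \<or> u = {a, c, opp a c b} \<or> u = {b, c, opp b c a}"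
    unfolding N_char[OF t] by simp
  then show ?thesis using that v t by blast
qed

lemma rk_ne: "flip_adj u v \<Longrightarrow> rk u \<noteq> rk v"
proof -
  assume "flip_adj u v"
  then obtain a b c where v: "v = {a, b, c}" and t: "tri a b c" and
    u: "u = {a, b, opp a b c} \<or> u = {a, c, opp a c b} \<or> u = {b, c, opp b c a}"
    by (rule adj_cases)
  have t2: "tri a c b" "tri b c a" using tri_perm[OF t] by auto
  note r = rk3[OF tri_opp[OF t]] rk3[OF tri_opp[OF t2(1)]] rk3[OF tri_opp[OF t2(2)]] rk3[OF t]
  have f: "Qf (opp a b c) \<noteq> Qf c" "Qf (opp a c b) \<noteq> Qf b" "Qf (opp b c a) \<noteq> Qf a"
    using rank_facts(1-3)[OF t] by auto
  have rv: "rk v = Qf a + Qf b + Qf c" using r(4) v by simp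
  from u consider "rk u = Qf a + Qf b + Qf (opp a b c)" | "rk u = Qf a + Qf c + Qf (opp a c b)"
    | "rk u = Qf b + Qf c + Qf (opp b c a)" using r(1-3) by force
  then show ?thesis using rv f by cases linarith+
qed

lemma rk_uniq:
  assumes "flip_adj u1 v" "flip_adj u2 v" "rk u1 < rk v" "rk u2 < rk v"
  shows "u1 = u2"
proof -
  obtain a b c where v: "v = {a, b, c}" and t: "tri a b c" and
    u1: "u1 = {a, b, opp a b c} \<or> u1 = {a, c, opp a c b} \<or> u1 = {b, c, opp b c a}"
    using assms(1) by (rule adj_cases)
  have "u2 \<in> {u. flip_adj u {a, b, c}}" using assms(2) v by simp
  then have u2: "u2 = {a, b, opp a b c} \<or> u2 = {a, c, opp a c b} \<or> u2 = {b, c, opp b c a}"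
    unfolding N_char[OF t] by simp
  have t2: "tri a c b" "tri b c a" using tri_perm[OF t] by auto
  note r = rk3[OF tri_opp[OF t]] rk3[OF tri_opp[OF t2(1)]] rk3[OF tri_opp[OF t2(2)]] rk3[OF t]
  have f: "Qf (opp a b c) \<ge> Qf c \<or> Qf (opp a c b) \<ge> Qf b"
    "Qf (opp a b c) \<ge> Qf c \<or> Qf (opp b c a) \<ge> Qf a"
    "Qf (opp a c b) \<ge> Qf b \<or> Qf (opp b c a) \<ge> Qf a" using rank_facts(4-6)[OF t] by auto
  have l1: "rk u1 < rk v" "rk u2 < rk v" by fact+
  have rv: "rk v = Qf a + Qf b + Qf c" using r(4) v by simp
  have d: "rk {a, b, opp a b c} = rk v + (Qf (opp a b c) - Qf c)" "rk {a, c, opp a c b} = rk v + (Qf (opp a c b) - Qf b)"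
    "rk {b, c, opp b c a} = rk v + (Qf (opp b c a) - Qf a)" using r rv by simp_all
  from u1 consider "u1 = {a, b, opp a b c}" | "u1 = {a, c, opp a c b}" | "u1 = {b, c, opp b c a}" by blast
  then show ?thesis
  proof cases
    case 1
    from u2 consider "u2 = {a, b, opp a b c}" | "u2 = {a, c, opp a c b}" | "u2 = {b, c, opp b c a}" by blast
    then show ?thesis
    proof cases
      case 1 then show ?thesis using \<open>u1 = {a, b, opp a b c}\<close> by simp
    next
      case 2 then show ?thesis using \<open>u1 = {a, b, opp a b c}\<close> l1 d f by auto
    next
      case 3 then show ?thesis using \<open>u1 = {a, b, opp a b c}\<close> l1 d f by auto
    qed
  next
    case 2
    from u2 consider "u2 = {a, b, opp a b c}" | "u2 = {a, c, opp a c b}" | "u2 = {b, c, opp b c a}" by blast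
    then show ?thesis
    proof cases
      case 1 then show ?thesis using \<open>u1 = {a, c, opp a c b}\<close> l1 d f by auto
    next
      case 2 then show ?thesis using \<open>u1 = {a, c, opp a c b}\<close> by simp
    next
      case 3 then show ?thesis using \<open>u1 = {a, c, opp a c b}\<close> l1 d f by auto
    qed
  next
    case 3
    from u2 consider "u2 = {a, b, opp a b c}" | "u2 = {a, c, opp a c b}" | "u2 = {b, c, opp b c a}" by blast
    then show ?thesis
    proof cases
      case 1 then show ?thesis using \<open>u1 = {b, c, opp b c a}\<close> l1 d f by auto
    next
      case 2 then show ?thesis using \<open>u1 = {b, c, opp b c a}\<close> l1 d f by auto
    next
      case 3 then show ?thesis using \<open>u1 = {b, c, opp b c a}\<close> by simp
    qed
  qed
qed

lemma rk_desc:
  assumes "is_triangulation v" "v \<noteq> froot"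
  shows "\<exists>u. flip_adj u v \<and> rk u < rk v"
proof -
  obtain a b c where v: "v = {a, b, c}" and t: "tri a b c" using assms(1) by (rule triang_cases)
  have t2: "tri a c b" "tri b c a" using tri_perm[OF t] by auto
  note r = rk3[OF tri_opp[OF t]] rk3[OF tri_opp[OF t2(1)]] rk3[OF tri_opp[OF t2(2)]] rk3[OF t]
  have N: "\<And>u. u \<in> {{a, b, opp a b c}, {a, c, opp a c b}, {b, c, opp b c a}} \<Longrightarrow> flip_adj u v"
    using N_char[OF t] v by blast
  have "\<not> (Qf (opp a b c) > Qf c \<and> Qf (opp a c b) > Qf b \<and> Qf (opp b c a) > Qf a)"
    using rank_facts(7)[OF t] assms(2) v by blast
  then have "Qf (opp a b c) < Qf c \<or> Qf (opp a c b) < Qf b \<or> Qf (opp b c a) < Qf a"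
    using rank_facts(1-3)[OF t] by linarith
  then show ?thesis
  proof (elim disjE)
    assume "Qf (opp a b c) < Qf c"
    moreover have "flip_adj {a, b, opp a b c} v" by (rule N) simp
    ultimately show ?thesis using r(1,4) v by (intro exI[of _ "{a, b, opp a b c}"]) simp
  next
    assume "Qf (opp a c b) < Qf b"
    moreover have "flip_adj {a, c, opp a c b} v" by (rule N) simp
    ultimately show ?thesis using r(2,4) v by (intro exI[of _ "{a, c, opp a c b}"]) simp
  next
    assume "Qf (opp b c a) < Qf a"
    moreover have "flip_adj {b, c, opp b c a} v" by (rule N) simp
    ultimately show ?thesis using r(3,4) v by (intro exI[of _ "{b, c, opp b c a}"]) simp
  qed
qed

lemma rk_nonneg: "rk t \<ge> 0"
  unfolding rk_def by (rule sum_nonneg) (simp add: Qf_nonneg)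


lemma key_alg:
  fixes a b c d ia ib ic wc :: "'a::comm_ring_1"
  assumes "a * ia = 1" "b * ib = 1" "c * ic = 1"
    "c * d = a^2 + b^2 + a * b * wc"
  shows "d * (ia * ib) = a * (ib * ic) + b * (ia * ic) + wc * ic"
proof -
  have "d * (ia * ib) = (c * ic) * d * (ia * ib)" using assms(3) by simp
  also have "\<dots> = (c * d) * (ia * ib * ic)" by (simp add: algebra_simps)
  also have "\<dots> = (a^2 + b^2 + a * b * wc) * (ia * ib * ic)" using assms(4) by simp
  also have "\<dots> = a * (ib * ic) * (a * ia) + b * (ia * ic) * (b * ib) + wc * ic * (a * ia) * (b * ib)"
    by (simp add: algebra_simps power2_eq_square)
  also have "\<dots> = a * (ib * ic) + b * (ia * ic) + wc * ic" using assms(1,2) by simp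
  finally show ?thesis .
qed

lemma flipinv_alg:
  fixes a b c d ia ib ic iq wa wb wc :: "'a::comm_ring_1"
  assumes "a * ia = 1" "b * ib = 1" "c * ic = 1" "d * iq = 1"
    "c * d = a^2 + b^2 + a * b * wc"
  shows "a * (ib * ic) + b * (ia * ic) + c * (ia * ib) + wa * ia + wb * ib + wc * ic =
         a * (ib * iq) + b * (ia * iq) + d * (ia * ib) + wa * ia + wb * ib + wc * iq"
proof -
  have e1: "d * (ia * ib) = a * (ib * ic) + b * (ia * ic) + wc * ic" using key_alg[OF assms(1-3,5)] .
  have "d * c = a^2 + b^2 + a * b * wc" using assms(5) by (simp add: mult.commute)
  then have e2: "c * (ia * ib) = a * (ib * iq) + b * (ia * iq) + wc * iq" using key_alg[OF assms(1,2,4)] by blast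
  show ?thesis using e1 e2 by (simp add: algebra_simps)
qed

lemma edge_alg:
  fixes a b c d ia ib ic wa wb wc :: "'a::comm_ring_1"
  assumes "a * ia = 1" "b * ib = 1" "c * ic = 1"
    "c * d = a^2 + b^2 + a * b * wc"
  shows "c * (ia * ib) + d * (ia * ib) + wa * ia + wb * ib =
         a * (ib * ic) + b * (ia * ic) + c * (ia * ib) + wa * ia + wb * ib + wc * ic"
  using key_alg[OF assms] by (simp add: algebra_simps)


lemma adj_form:
  assumes "flip_adj u v"
  obtains x y z w where "v = {x, y, z}" "u = {x, y, w}" "tri x y z" "tri x y w" "z \<noteq> w"
proof -
  obtain a b c where v: "v = {a, b, c}" and t: "tri a b c" and
    u: "u = {a, b, opp a b c} \<or> u = {a, c, opp a c b} \<or> u = {b, c, opp b c a}"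
    using assms by (rule adj_cases)
  have t2: "tri a c b" "tri b c a" using tri_perm[OF t] by auto
  from u show ?thesis
  proof (elim disjE)
    assume "u = {a, b, opp a b c}"
    then show ?thesis using that[of a b c "opp a b c"] v t tri_opp[OF t] opp_props[OF t] by auto
  next
    assume "u = {a, c, opp a c b}"
    moreover have "v = {a, c, b}" using v by auto
    ultimately show ?thesis using that[of a c b "opp a c b"] t2 tri_opp[OF t2(1)] opp_props[OF t2(1)] by auto
  next
    assume "u = {b, c, opp b c a}"
    moreover have "v = {b, c, a}" using v by auto
    ultimately show ?thesis using that[of b c a "opp b c a"] t2 tri_opp[OF t2(2)] opp_props[OF t2(2)] by auto
  qed
qed

lemma body_zero: "body_hom body \<Longrightarrow> body 0 = 0"
  unfolding body_hom_def by (metis add_0 add_cancel_right_right)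

lemma body_diff: "body_hom body \<Longrightarrow> body (x - y) = body x - body y"
  unfolding body_hom_def by (metis add_diff_cancel_right' diff_add_cancel eq_diff_eq)

lemma rinv_eq:
  fixes x y :: "'a::comm_ring_1"
  assumes "x * y = 1" shows "rinv x = y"
proof -
  have "(THE y. x * y = 1) = y"
  proof (rule the_equality)
    fix y' assume "x * y' = 1"
    then have "y' = y' * (x * y)" using assms by simp
    also have "\<dots> = (x * y') * y" by (simp add: algebra_simps)
    finally show "y' = y" using \<open>x * y' = 1\<close> by simp
  qed (fact assms)
  then show ?thesis using assms by (auto simp: rinv_def)
qed

lemma unit_body:
  fixes x :: "'a::{real_algebra_1, comm_ring_1}"
  assumes bh: "body_hom body" and nz: "body x \<noteq> 0"
  shows "x * rinv x = 1"
proof -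
  define r where "r = body x"
  define n where "n = 1 - inverse r *\<^sub>R x"
  have "body n = body 1 - inverse r * body x"
    using bh unfolding n_def by (simp add: body_diff[OF bh]) (simp add: body_hom_def)
  then have "body n = 0" using bh nz by (simp add: body_hom_def r_def)
  then obtain k where k: "n ^ k = 0" using bh by (auto simp: body_hom_def)
  have "1 - n ^ k = (1 - n) * (\<Sum>i<k. n ^ i)" by (rule one_diff_power_eq)
  then have "(inverse r *\<^sub>R x) * (\<Sum>i<k. n ^ i) = 1" using k by (simp add: n_def)
  then have "x * (inverse r *\<^sub>R (\<Sum>i<k. n ^ i)) = 1" by (simp add: scaleR_left_commute)
  then show ?thesis using rinv_eq by metis
qed

lemma rinv_mult:
  fixes x y :: "'a::comm_ring_1"
  assumes "x * rinv x = 1" "y * rinv y = 1"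
  shows "rinv (x * y) = rinv x * rinv y"
proof (rule rinv_eq)
  have "x * y * (rinv x * rinv y) = (x * rinv x) * (y * rinv y)" by (simp add: algebra_simps)
  then show "x * y * (rinv x * rinv y) = 1" using assms by simp
qed

lemma rinv_2:
  fixes x :: "'a::{real_algebra_1, comm_ring_1}"
  assumes "x * rinv x = 1"
  shows "rinv (2 * x) = of_real (1/2) * rinv x"
proof (rule rinv_eq)
  have "(2::'a) * of_real (1/2) = 1"
    by (metis of_real_1 of_real_mult of_real_numeral field_sum_of_halves mult_2 times_divide_eq_right mult.right_neutral)
  then have "2 * x * (of_real (1/2) * rinv x) = (2 * of_real (1/2)) * (x * rinv x)" by (simp add: algebra_simps)
  then show "2 * x * (of_real (1/2) * rinv x) = 1" using assms \<open>(2::'a) * of_real (1/2) = 1\<close> by simp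
qed

lemma half2: "(2::'a::{real_algebra_1, comm_ring_1}) * of_real (1/2) = 1"
  by (metis of_real_1 of_real_mult of_real_numeral field_sum_of_halves mult_2 times_divide_eq_right mult.right_neutral)


abbreviation "SP lam W t \<equiv> semi_perimeter lam W t"

lemma sp_bh: "super_point body lam W \<Longrightarrow> body_hom body"
  by (simp add: super_point_def)

lemma sp_unit:
  assumes "super_point body lam W" "is_arc x"
  shows "lam x * rinv (lam x) = 1"
proof -
  have "body (lam x) > 0" using assms unfolding super_point_def by blast
  then show ?thesis using unit_body[OF sp_bh[OF assms(1)]] by simp
qed

lemma sp_flip:
  assumes "super_point body lam W" "tri a b c" "tri a b d" "c \<noteq> d"
  shows "lam c * lam d = lam a ^ 2 + lam b ^ 2 + lam a * lam b * W c"
proof -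
  have "flip_relation lam W" using assms(1) unfolding super_point_def by blast
  moreover have "is_triangulation {a, b, c}" "is_triangulation {a, b, d}" using assms triang_iff by blast+
  ultimately show ?thesis using assms(4) unfolding flip_relation_def by blast
qed

lemma sp_W:
  assumes sp: "super_point body lam W" and t: "tri a b c" "tri a b d" "c \<noteq> d"
  shows "W d = W c"
proof -
  have e1: "lam c * lam d = lam a ^ 2 + lam b ^ 2 + lam a * lam b * W c" using sp_flip[OF sp t] .
  have e2: "lam d * lam c = lam a ^ 2 + lam b ^ 2 + lam a * lam b * W d" using sp_flip[OF sp t(2,1)] t(3) by simp
  have e: "lam a * lam b * W c = lam a * lam b * W d" using e1 e2 by (simp add: mult.commute)
  have ua: "lam a * rinv (lam a) = 1" and ub: "lam b * rinv (lam b) = 1"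
    using sp_unit[OF sp] t by (auto simp: tri_def)
  have "W c = (lam a * rinv (lam a)) * (lam b * rinv (lam b)) * W c" using ua ub by simp
  also have "\<dots> = (rinv (lam a) * rinv (lam b)) * (lam a * lam b * W c)" by (simp add: algebra_simps)
  also have "\<dots> = (rinv (lam a) * rinv (lam b)) * (lam a * lam b * W d)" using e by simp
  also have "\<dots> = (lam a * rinv (lam a)) * (lam b * rinv (lam b)) * W d" by (simp add: algebra_simps)
  finally show ?thesis using ua ub by simp
qed

lemma SP3:
  assumes sp: "super_point body lam W" and t: "tri a b c"
  shows "SP lam W {a, b, c} = lam a * (rinv (lam b) * rinv (lam c)) + lam b * (rinv (lam a) * rinv (lam c))
     + lam c * (rinv (lam a) * rinv (lam b)) + W a * rinv (lam a) + W b * rinv (lam b) + W c * rinv (lam c)"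
proof -
  have d: "a \<noteq> b" "a \<noteq> c" "b \<noteq> c" using tri_distinct[OF t] by auto
  have u: "lam a * rinv (lam a) = 1" "lam b * rinv (lam b) = 1" "lam c * rinv (lam c) = 1"
    using sp_unit[OF sp] t by (auto simp: tri_def)
  have s1: "{a, b, c} - {a} = {b, c}" "{a, b, c} - {b} = {a, c}" "{a, b, c} - {c} = {a, b}" using d by auto
  show ?thesis unfolding semi_perimeter_def using d
    by (simp add: s1 rinv_mult[OF u(2,3)] rinv_mult[OF u(1,3)] rinv_mult[OF u(1,2)] algebra_simps)
qed

lemma SP_flip:
  assumes sp: "super_point body lam W" and t: "tri a b c" "tri a b d" "c \<noteq> d"
  shows "SP lam W {a, b, c} = SP lam W {a, b, d}"
proof -
  have u: "lam a * rinv (lam a) = 1" "lam b * rinv (lam b) = 1" "lam c * rinv (lam c) = 1"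
    "lam d * rinv (lam d) = 1"
    using sp_unit[OF sp] t by (auto simp: tri_def)
  show ?thesis unfolding SP3[OF sp t(1)] SP3[OF sp t(2)] sp_W[OF sp t]
    by (rule flipinv_alg[OF u sp_flip[OF sp t]])
qed

lemma SP_adj:
  assumes sp: "super_point body lam W" and "flip_adj u v"
  shows "SP lam W u = SP lam W v"
proof -
  obtain x y z w where "v = {x, y, z}" "u = {x, y, w}" "tri x y z" "tri x y w" "z \<noteq> w"
    using assms(2) by (rule adj_form)
  then show ?thesis using SP_flip[OF sp] by metis
qed

lemma froot_tri: "tri (1,0) (0,1) (-1,1)"
  by (simp add: tri_def is_arc_def arcs_disjoint_def)

lemma base_tri: "tri (1,0) (0,1) (1,1)"
  by (simp add: tri_def is_arc_def arcs_disjoint_def)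

lemma SP_const:
  assumes sp: "super_point body lam W" and t: "is_triangulation t"
  shows "SP lam W t = super_semiperimeter lam W"
proof -
  have froot: "SP lam W froot = super_semiperimeter lam W"
    unfolding super_semiperimeter_def base_triangulation_def froot_def
    using SP_flip[OF sp froot_tri base_tri] by simp
  have "\<forall>t. is_triangulation t \<and> nat (rk t) = n \<longrightarrow> SP lam W t = SP lam W froot" for n
  proof (induction n rule: less_induct)
    case (less n)
    show ?case
    proof (intro allI impI)
      fix t assume a: "is_triangulation t \<and> nat (rk t) = n"
      show "SP lam W t = SP lam W froot"
      proof (cases "t = froot")
        case False
        then obtain u where u: "flip_adj u t" "rk u < rk t" using rk_desc a by blast
        have "nat (rk u) < n" using u(2) a rk_nonneg[of u] by linarith
        moreover have "is_triangulation u" using u(1) by (simp add: flip_adj_def)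
        ultimately have "SP lam W u = SP lam W froot" using less by blast
        then show ?thesis using SP_adj[OF sp u(1)] by simp
      qed simp
    qed
  qed
  from this[of "nat (rk t)"] show ?thesis using t froot by simp
qed


lemma body_rinv:
  assumes bh: "body_hom body" and u: "x * rinv x = 1"
  shows "body (rinv x) = 1 / body x"
proof -
  have "body x * body (rinv x) = 1" using bh u unfolding body_hom_def by metis
  moreover then have "body x \<noteq> 0" by auto
  ultimately show ?thesis by (simp add: eq_divide_eq mult.commute)
qed

lemma body_SP_pos:
  assumes sp: "super_point body lam W" and t: "tri a b c"
  shows "body (SP lam W {a, b, c}) > 0"
proof -
  have bh: "body_hom body" using sp by (rule sp_bh)
  have add: "\<And>x y. body (x + y) = body x + body y" and mul: "\<And>x y. body (x * y) = body x * body y"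
    using bh unfolding body_hom_def by blast+
  have ar: "is_arc a" "is_arc b" "is_arc c" using t by (auto simp: tri_def)
  have pos: "body (lam a) > 0" "body (lam b) > 0" "body (lam c) > 0"
    using sp ar unfolding super_point_def by blast+
  have w0: "body (W a) = 0" "body (W b) = 0" "body (W c) = 0"
    using sp ar unfolding super_point_def by blast+
  have ri: "body (rinv (lam a)) = 1 / body (lam a)" "body (rinv (lam b)) = 1 / body (lam b)"
    "body (rinv (lam c)) = 1 / body (lam c)"
    using body_rinv[OF bh] sp_unit[OF sp] ar by auto
  have "body (SP lam W {a, b, c}) = body (lam a) * ((1 / body (lam b)) * (1 / body (lam c)))
     + body (lam b) * ((1 / body (lam a)) * (1 / body (lam c)))
     + body (lam c) * ((1 / body (lam a)) * (1 / body (lam b)))"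
    unfolding SP3[OF sp t] by (simp add: add mul ri w0)
  also have "\<dots> > 0" using pos by (intro add_pos_pos mult_pos_pos) auto
  finally show ?thesis .
qed

lemma h_unit:
  assumes sp: "super_point body lam W"
  shows "super_semiperimeter lam W * rinv (super_semiperimeter lam W) = 1"
proof -
  have "body (super_semiperimeter lam W) > 0"
    using body_SP_pos[OF sp base_tri] unfolding super_semiperimeter_def base_triangulation_def .
  then show ?thesis using unit_body[OF sp_bh[OF sp]] by simp
qed

lemma psi_form:
  assumes sp: "super_point body lam W" and t: "tri a b c" "tri a b d" "c \<noteq> d"
  shows "psi lam W h ({a, b, d}, {a, b, c}) = rinv h * (lam c * (rinv (lam a) * rinv (lam b))
     + W a * (of_real (1/2) * rinv (lam a)) + W b * (of_real (1/2) * rinv (lam b)))"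
proof -
  have d1: "a \<noteq> b" "a \<noteq> c" "b \<noteq> c" using tri_distinct[OF t(1)] by auto
  have d2: "a \<noteq> d" "b \<noteq> d" using tri_distinct[OF t(2)] by auto
  have u: "lam a * rinv (lam a) = 1" "lam b * rinv (lam b) = 1"
    using sp_unit[OF sp] t by (auto simp: tri_def)
  have s1: "{a, b, c} - {a, b, d} = {c}" using d1 d2 t(3) by auto
  have s2: "{a, b, d} \<inter> {a, b, c} = {a, b}" using d1 d2 t(3) by auto
  show ?thesis unfolding psi_def Let_def fst_conv snd_conv s1 s2
    by (simp add: d1 rinv_mult[OF u] rinv_2[OF u(1)] rinv_2[OF u(2)] add.assoc)
qed

lemma edge_sum:
  assumes sp: "super_point body lam W" and a: "flip_adj u v"
  shows "psi lam W (super_semiperimeter lam W) (u, v) + psi lam W (super_semiperimeter lam W) (v, u) = 1"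
proof -
  obtain x y z w where v: "v = {x, y, z}" and u: "u = {x, y, w}" and t: "tri x y z" "tri x y w" "z \<noteq> w"
    using a by (rule adj_form)
  define h where "h = super_semiperimeter lam W"
  have hv: "SP lam W v = h" using SP_const[OF sp] t(1) v triang_iff h_def by blast
  have uu: "lam x * rinv (lam x) = 1" "lam y * rinv (lam y) = 1" "lam z * rinv (lam z) = 1"
    using sp_unit[OF sp] t by (auto simp: tri_def)
  define hf where "hf = (of_real (1/2) :: 'a)"
  have hf: "2 * hf = 1" unfolding hf_def by (rule half2)
  have "psi lam W h (u, v) + psi lam W h (v, u) =
     rinv h * ((lam z * (rinv (lam x) * rinv (lam y)) + lam w * (rinv (lam x) * rinv (lam y)))
       + (2 * hf) * (W x * rinv (lam x) + W y * rinv (lam y)))"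
    unfolding u v psi_form[OF sp t] psi_form[OF sp t(2,1) t(3)[symmetric]] hf_def[symmetric]
    by (simp add: algebra_simps)
  also have "\<dots> = rinv h * SP lam W {x, y, z}"
    unfolding SP3[OF sp t(1)] hf using edge_alg[OF uu sp_flip[OF sp t]] by (simp add: algebra_simps)
  also have "\<dots> = 1" using hv v h_unit[OF sp] h_def by (simp add: mult.commute)
  finally show ?thesis unfolding h_def .
qed

lemma vertex_sum:
  assumes sp: "super_point body lam W" and vt: "is_triangulation v"
  shows "finite {u. flip_adj u v}"
    "(\<Sum>u\<in>{u. flip_adj u v}. psi lam W (super_semiperimeter lam W) (u, v)) = 1"
proof -
  obtain a b c where v: "v = {a, b, c}" and t: "tri a b c" using vt by (rule triang_cases)
  have t2: "tri a c b" "tri b c a" using tri_perm[OF t] by auto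
  have N: "{u. flip_adj u v} = {{a, b, opp a b c}, {a, c, opp a c b}, {b, c, opp b c a}}"
    using N_char[OF t] v by simp
  then show "finite {u. flip_adj u v}" by simp
  define h where "h = super_semiperimeter lam W"
  have hv: "SP lam W v = h" using SP_const[OF sp vt] h_def by blast
  have uu: "lam a * rinv (lam a) = 1" "lam b * rinv (lam b) = 1" "lam c * rinv (lam c) = 1"
    using sp_unit[OF sp] t by (auto simp: tri_def)
  define hf where "hf = (of_real (1/2) :: 'a)"
  have hf: "2 * hf = 1" unfolding hf_def by (rule half2)
  have v2: "v = {a, c, b}" "v = {b, c, a}" using v by auto
  have o: "opp a b c \<noteq> c" "opp a c b \<noteq> b" "opp b c a \<noteq> a"
    using opp_props[OF t] opp_props[OF t2(1)] opp_props[OF t2(2)] by auto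
  have p1: "psi lam W h ({a, b, opp a b c}, v) = rinv h * (lam c * (rinv (lam a) * rinv (lam b))
     + W a * (hf * rinv (lam a)) + W b * (hf * rinv (lam b)))"
    unfolding v hf_def by (rule psi_form[OF sp t tri_opp[OF t] o(1)[symmetric]])
  have p2: "psi lam W h ({a, c, opp a c b}, v) = rinv h * (lam b * (rinv (lam a) * rinv (lam c))
     + W a * (hf * rinv (lam a)) + W c * (hf * rinv (lam c)))"
    unfolding v2(1) hf_def by (rule psi_form[OF sp t2(1) tri_opp[OF t2(1)] o(2)[symmetric]])
  have p3: "psi lam W h ({b, c, opp b c a}, v) = rinv h * (lam a * (rinv (lam b) * rinv (lam c))
     + W b * (hf * rinv (lam b)) + W c * (hf * rinv (lam c)))"
    unfolding v2(2) hf_def by (rule psi_form[OF sp t2(2) tri_opp[OF t2(2)] o(3)[symmetric]])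
  have "(\<Sum>u\<in>{u. flip_adj u v}. psi lam W h (u, v)) =
     psi lam W h ({a, b, opp a b c}, v) + psi lam W h ({a, c, opp a c b}, v) + psi lam W h ({b, c, opp b c a}, v)"
    unfolding N using N_distinct[OF t] by (simp add: add.assoc)
  also have "\<dots> = rinv h * (lam a * (rinv (lam b) * rinv (lam c)) + lam b * (rinv (lam a) * rinv (lam c))
     + lam c * (rinv (lam a) * rinv (lam b)) + (2 * hf) * (W a * rinv (lam a) + W b * rinv (lam b) + W c * rinv (lam c)))"
    unfolding p1 p2 p3 by (simp add: algebra_simps)
  also have "\<dots> = rinv h * SP lam W v" unfolding v SP3[OF sp t] hf by (simp add: algebra_simps)
  also have "\<dots> = 1" using hv h_unit[OF sp] h_def by (simp add: mult.commute)
  finally show "(\<Sum>u\<in>{u. flip_adj u v}. psi lam W (super_semiperimeter lam W) (u, v)) = 1"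
    unfolding h_def .
qed


lemma tree_count:
  fixes adj :: "'v \<Rightarrow> 'v \<Rightarrow> bool" and rk :: "'v \<Rightarrow> int"
  assumes fin: "finite T" and ne: "T \<noteq> {}"
    and conn: "\<forall>s\<in>T. \<forall>t\<in>T. (\<lambda>x y. x \<in> T \<and> y \<in> T \<and> adj x y)\<^sup>*\<^sup>* s t"
    and sym: "\<And>x y. adj x y \<Longrightarrow> adj y x"
    and dst: "\<And>x y. adj x y \<Longrightarrow> rk x \<noteq> rk y"
    and uniq: "\<And>v u1 u2. adj u1 v \<Longrightarrow> adj u2 v \<Longrightarrow> rk u1 < rk v \<Longrightarrow> rk u2 < rk v \<Longrightarrow> u1 = u2"
  shows "card {(u, v). u \<in> T \<and> v \<in> T \<and> adj u v \<and> rk v < rk u} = card T - 1"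
proof -
  define L where "L = {(u, v). u \<in> T \<and> v \<in> T \<and> adj u v \<and> rk v < rk u}"
  have finL: "finite L" by (rule finite_subset[of _ "T \<times> T"]) (auto simp: L_def fin)
  have "Min (rk ` T) \<in> rk ` T" using fin ne by simp
  then obtain m where m0: "m \<in> T" "rk m = Min (rk ` T)" by auto
  have m: "m \<in> T" "\<And>x. x \<in> T \<Longrightarrow> rk m \<le> rk x"
    using m0 fin by auto
  have up: "card L \<le> card T - 1"
  proof -
    have inj: "inj_on fst L"
    proof (rule inj_onI)
      fix p q assume "p \<in> L" "q \<in> L" "fst p = fst q"
      then obtain u v1 v2 where p: "p = (u, v1)" and q: "q = (u, v2)" and
        h: "adj u v1" "adj u v2" "rk v1 < rk u" "rk v2 < rk u"
        unfolding L_def by auto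
      have "v1 = v2" using uniq[OF sym[OF h(1)] sym[OF h(2)] h(3,4)] .
      then show "p = q" using p q by simp
    qed
    have "fst ` L \<subseteq> T - {m}" using m unfolding L_def by force
    then have "card (fst ` L) \<le> card (T - {m})" using fin by (intro card_mono) auto
    then show ?thesis using card_image[OF inj] m(1) fin by simp
  qed
  obtain r where r: "r \<in> T" using ne by blast
  define R where "R = (\<lambda>x y. x \<in> T \<and> y \<in> T \<and> adj x y)"
  define dist where "dist v = (LEAST n. (R ^^ n) v r)" for v
  have ex: "\<exists>n. (R ^^ n) v r" if "v \<in> T" for v
    using conn r that unfolding R_def by (metis rtranclp_power)
  have step: "\<exists>w. R v w \<and> dist w < dist v" if "v \<in> T" "v \<noteq> r" for v
  proof -
    have d: "(R ^^ dist v) v r" unfolding dist_def using ex[OF that(1)] by (rule LeastI_ex)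
    have "dist v \<noteq> 0" using d that(2) by (cases "dist v") auto
    then obtain k where k: "dist v = Suc k" by (cases "dist v") auto
    then obtain w where w: "R v w" "(R ^^ k) w r" using d by (metis relpowp_Suc_D2)
    have "dist w \<le> k" unfolding dist_def using w(2) by (rule Least_le)
    then show ?thesis using w k by auto
  qed
  define g where "g v = (SOME w. R v w \<and> dist w < dist v)" for v
  have g: "R v (g v) \<and> dist (g v) < dist v" if "v \<in> T - {r}" for v
    unfolding g_def using step that by (metis (mono_tags, lifting) DiffD1 DiffD2 insertI1 someI_ex)
  define e where "e v = (if rk (g v) < rk v then (v, g v) else (g v, v))" for v
  have eL: "e ` (T - {r}) \<subseteq> L"
  proof
    fix p assume "p \<in> e ` (T - {r})"
    then obtain v where v: "v \<in> T - {r}" "p = e v" by blast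
    have "R v (g v)" using g[OF v(1)] by simp
    then have a: "v \<in> T" "g v \<in> T" "adj v (g v)" "adj (g v) v" "rk v \<noteq> rk (g v)"
      unfolding R_def using sym dst by auto
    then show "p \<in> L" unfolding v(2) e_def L_def by auto
  qed
  have inj: "inj_on e (T - {r})"
  proof (rule inj_onI)
    fix v v' assume v: "v \<in> T - {r}" and v': "v' \<in> T - {r}" and ee: "e v = e v'"
    have gv: "dist (g v) < dist v" and gv': "dist (g v') < dist v'" using g v v' by auto
    show "v = v'"
    proof (rule ccontr)
      assume ne: "v \<noteq> v'"
      then have "(v = g v' \<and> g v = v')" using ee unfolding e_def by (auto split: if_splits)
      then show False using gv gv' by auto
    qed
  qed
  have "card (T - {r}) \<le> card L" using card_inj_on_le[OF inj eL finL] .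
  then have "card T - 1 \<le> card L" using r fin by simp
  then show ?thesis using up unfolding L_def by simp
qed


theorem proposition5p1:
  fixes body :: "'a::{real_algebra_1, comm_ring_1} \<Rightarrow> real"
    and lam W :: "arc \<Rightarrow> 'a"
    and T :: "arc set set"
  assumes "super_point body lam W"
    and "finite_subtree T"
  shows "(\<Sum>e\<in>coboundary T. psi lam W (super_semiperimeter lam W) e) = 1"
proof -
  note sp = assms(1)
  define f where "f = psi lam W (super_semiperimeter lam W)"
  have fin: "finite T" and ne: "T \<noteq> {}" and tri: "\<And>t. t \<in> T \<Longrightarrow> is_triangulation t"
    and conn: "\<forall>s\<in>T. \<forall>t\<in>T. (\<lambda>x y. x \<in> T \<and> y \<in> T \<and> flip_adj x y)\<^sup>*\<^sup>* s t"
    using assms(2) unfolding finite_subtree_def by auto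
  define A where "A = {(u, v). flip_adj u v \<and> v \<in> T}"
  define P where "P = {(u, v). u \<in> T \<and> v \<in> T \<and> flip_adj u v}"
  define L where "L = {(u, v). u \<in> T \<and> v \<in> T \<and> flip_adj u v \<and> rk v < rk u}"
  have Aeq: "A = (\<lambda>(v, u). (u, v)) ` (SIGMA v:T. {u. flip_adj u v})"
    unfolding A_def by force
  have finS: "finite (SIGMA v:T. {u. flip_adj u v})"
    using fin vertex_sum(1)[OF sp tri] by (intro finite_SigmaI) auto
  have injS: "inj_on (\<lambda>(v, u). (u, v)) (SIGMA v:T. {u. flip_adj u v})"
    by (auto simp: inj_on_def)
  have finA: "finite A" unfolding Aeq using finS by simp
  have sumA: "sum f A = of_nat (card T)"
  proof -
    have "sum f A = (\<Sum>(v, u)\<in>(SIGMA v:T. {u. flip_adj u v}). f (u, v))"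
      unfolding Aeq by (subst sum.reindex[OF injS]) (simp add: case_prod_unfold)
    also have "\<dots> = (\<Sum>v\<in>T. \<Sum>u\<in>{u. flip_adj u v}. f (u, v))"
      using fin vertex_sum(1)[OF sp tri] by (subst sum.Sigma) auto
    also have "\<dots> = (\<Sum>v\<in>T. 1)"
      using vertex_sum(2)[OF sp tri] unfolding f_def by (intro sum.cong) auto
    finally show ?thesis by simp
  qed
  have AU: "A = coboundary T \<union> P" and AD: "coboundary T \<inter> P = {}"
    unfolding A_def P_def coboundary_def by auto
  have finP: "finite P" and finC: "finite (coboundary T)" using finA AU by auto
  have PU: "P = L \<union> prod.swap ` L"
    unfolding P_def L_def using rk_ne adj_sym by (auto simp: image_iff) (metis linorder_neqE)
  have PD: "L \<inter> prod.swap ` L = {}" unfolding L_def by auto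
  have finL: "finite L" using finP PU by auto
  have sumP: "sum f P = of_nat (card L)"
  proof -
    have "sum f P = sum f L + sum f (prod.swap ` L)"
      unfolding PU using finL PD by (intro sum.union_disjoint) auto
    also have "sum f (prod.swap ` L) = (\<Sum>e\<in>L. f (prod.swap e))"
      by (subst sum.reindex) (auto simp: inj_on_def)
    also have "sum f L + \<dots> = (\<Sum>e\<in>L. f e + f (prod.swap e))" by (simp add: sum.distrib)
    also have "\<dots> = (\<Sum>e\<in>L. 1)"
      using edge_sum[OF sp] unfolding f_def L_def by (intro sum.cong) auto
    finally show ?thesis by simp
  qed
  have cardL: "card L = card T - 1"
    unfolding L_def
  proof (rule tree_count[OF fin ne conn])
    show "\<And>x y. flip_adj x y \<Longrightarrow> flip_adj y x" by (rule adj_sym)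
    show "\<And>x y. flip_adj x y \<Longrightarrow> rk x \<noteq> rk y" by (rule rk_ne)
    show "\<And>v u1 u2. flip_adj u1 v \<Longrightarrow> flip_adj u2 v \<Longrightarrow> rk u1 < rk v \<Longrightarrow> rk u2 < rk v \<Longrightarrow> u1 = u2"
      by (rule rk_uniq)
  qed
  have "sum f A = sum f (coboundary T) + sum f P"
    unfolding AU using finC finP AD by (intro sum.union_disjoint) auto
  then have "sum f (coboundary T) = of_nat (card T) - of_nat (card T - 1)"
    using sumA sumP cardL by (simp add: algebra_simps)
  also have "\<dots> = 1"
  proof -
    have "card T \<ge> 1" using fin ne by (simp add: Suc_le_eq card_gt_0_iff)
    then show ?thesis by (simp add: of_nat_diff)
  qed
  finally show ?thesis unfolding f_def .
qed

end
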